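(* For any valid scheme (satisfying (C1)–(C8)) with $N\ge1$, $K\ge2$, \[ \frac{N-1}{N}\,d+\rho_U\ \ge\ 1, \] equivalently $NL\le (N-1)D+N\,H(\mathcal{R}_U)$.
   Context: Model (SPIR with user-side common randomness). There are $N\ge1$ non-colluding databases, each storing the same $K\ge2$ messages $W_1,\dots,W_K$. Each message consists of $L$ i.i.d. symbols uniform over a sufficiently large finite field $\mathbb{F}_q$; entropies are in $q$-ary units, so $H(W_k)=L$ and $H(W_{1:K})=KL$. The databases share server-side common randomness $\mathcal{R}_S$, unknown to the user. The user holds user-side common randomness $\mathcal{R}_U$, a subset of the components of $\mathcal{R}_S$, unknown to the databases except for its size (uniform over subsets of given cardinality). $\mathcal{F}$ is the user's retrieval-strategy randomness. To retrieve $W_k$ the user sends $Q_n^{[k,\mathcal{R}_U]}$ to database $n$, receiving $A_n^{[k,\mathcal{R}_U]}$; $W_{\bar k}=\{W_j:j\ne k\}$. A valid scheme satisfies for all $k,n,\mathcal{R}_U$: (C1) $I(W_{1:K};k,\mathcal{F},\mathcal{R}_S,\mathcal{R}_U)=0$; (C2) $I(Q_{1:N}^{[k,\mathcal{R}_U]};W_{1:K},\mathcal{R}_S\setminus\mathcal{R}_U)=0$; (C3) $H(Q_{1:N}^{[k,\mathcal{R}_U]}\mid\mathcal{F})=0$; (C4) $H(A_n^{[k,\mathcal{R}_U]}\mid Q_n^{[k,\mathcal{R}_U]},W_{1:K},\mathcal{R}_S)=0$; (C5) $H(W_k\mid\mathcal{F},A_{1:N}^{[k,\mathcal{R}_U]},\mathcal{R}_U)=0$;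 (C6) user privacy: for all $k,k',n,\mathcal{R}_U$ there is $\mathcal{R}_U'$ with $H(\mathcal{R}_U')=H(\mathcal{R}_U)$ and $(Q_n^{[k,\mathcal{R}_U]},A_n^{[k,\mathcal{R}_U]},W_{1:K},\mathcal{R}_S)\sim(Q_n^{[k',\mathcal{R}_U']},A_n^{[k',\mathcal{R}_U']},W_{1:K},\mathcal{R}_S)$; (C7) $I(W_{\bar k};\mathcal{F},A_{1:N}^{[k,\mathcal{R}_U]},\mathcal{R}_U)=0$; (C8) $I(\mathcal{R}_S\setminus\mathcal{R}_U;\mathcal{F},A_{1:N}^{[k,\mathcal{R}_U]},W_k,\mathcal{R}_U)=0$. $D$ is the maximal total number of downloaded symbols; $d=D/L$, $\rho_U=H(\mathcal{R}_U)/L$. *)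

theory Defs
  imports "HOL-Probability.Probability_Mass_Function" "HOL-Library.FuncSet"
begin

definition ent :: "real \<Rightarrow> 'w pmf \<Rightarrow> ('w \<Rightarrow> 'a) \<Rightarrow> real" where
  "ent b M X = - (\<Sum>x\<in>set_pmf (map_pmf X M).
       pmf (map_pmf X M) x * log b (pmf (map_pmf X M) x))"

definition cond_ent :: "real \<Rightarrow> 'w pmf \<Rightarrow> ('w \<Rightarrow> 'a) \<Rightarrow> ('w \<Rightarrow> 'b) \<Rightarrow> real" where
  "cond_ent b M X Y = ent b M (\<lambda>\<omega>. (X \<omega>, Y \<omega>)) - ent b M Y"

definition mut_inf :: "real \<Rightarrow> 'w pmf \<Rightarrow> ('w \<Rightarrow> 'a) \<Rightarrow> ('w \<Rightarrow> 'b) \<Rightarrow> real" where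
  "mut_inf b M X Y = ent b M X + ent b M Y - ent b M (\<lambda>\<omega>. (X \<omega>, Y \<omega>))"

text \<open>Collections of random variables.  Messages are indexed by 1..K,
  databases by 1..N, components of the server-side randomness by the finite set Cc.\<close>

definition W_all :: "nat \<Rightarrow> (nat \<Rightarrow> 'w \<Rightarrow> 'm) \<Rightarrow> 'w \<Rightarrow> nat \<Rightarrow> 'm" where
  "W_all K W = (\<lambda>\<omega>. (\<lambda>j\<in>{1..K}. W j \<omega>))"

definition W_bar :: "nat \<Rightarrow> (nat \<Rightarrow> 'w \<Rightarrow> 'm) \<Rightarrow> nat \<Rightarrow> 'w \<Rightarrow> nat \<Rightarrow> 'm" where
  "W_bar K W k = (\<lambda>\<omega>. (\<lambda>j\<in>{1..K} - {k}. W j \<omega>))"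

text \<open>The components of the server-side randomness indexed by S.
  R_S is rand_part RS Cc, R_U is rand_part RS S, R_S minus R_U is rand_part RS (Cc - S).\<close>
definition rand_part :: "('w \<Rightarrow> 'c \<Rightarrow> 'r) \<Rightarrow> 'c set \<Rightarrow> 'w \<Rightarrow> 'c \<Rightarrow> 'r" where
  "rand_part RS S = (\<lambda>\<omega>. restrict (RS \<omega>) S)"

definition all_db :: "nat \<Rightarrow> (nat \<Rightarrow> 'w \<Rightarrow> 'a) \<Rightarrow> 'w \<Rightarrow> nat \<Rightarrow> 'a" where
  "all_db N X = (\<lambda>\<omega>. (\<lambda>n\<in>{1..N}. X n \<omega>))"

definition admissible :: "'c set \<Rightarrow> nat \<Rightarrow> 'c set \<Rightarrow> bool" where
  "admissible Cc m S \<longleftrightarrow> S \<subseteq> Cc \<and> card S = m"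

text \<open>Q k S n and A k S n are the query to /
  answer of database n when the user wants W_k and holds user-side randomness
  indexed by S (an admissible subset of components).\<close>
definition valid_scheme ::
  "real \<Rightarrow> 'w pmf \<Rightarrow> nat \<Rightarrow> nat \<Rightarrow> (nat \<Rightarrow> 'w \<Rightarrow> 'm) \<Rightarrow> ('w \<Rightarrow> 'c \<Rightarrow> 'r) \<Rightarrow> 'c set \<Rightarrow> nat
   \<Rightarrow> ('w \<Rightarrow> 'f) \<Rightarrow> (nat \<Rightarrow> 'c set \<Rightarrow> nat \<Rightarrow> 'w \<Rightarrow> 'qu) \<Rightarrow> (nat \<Rightarrow> 'c set \<Rightarrow> nat \<Rightarrow> 'w \<Rightarrow> 'an) \<Rightarrow> bool"
where
  "valid_scheme b M N K W RS Cc m F Q A \<longleftrightarrow>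
    (\<forall>k\<in>{1..K}. \<forall>S. admissible Cc m S \<longrightarrow>
       \<comment> \<open>(C1)\<close>
       mut_inf b M (W_all K W) (\<lambda>\<omega>. (F \<omega>, rand_part RS Cc \<omega>, rand_part RS S \<omega>)) = 0 \<and>
       \<comment> \<open>(C2)\<close>
       mut_inf b M (all_db N (Q k S)) (\<lambda>\<omega>. (W_all K W \<omega>, rand_part RS (Cc - S) \<omega>)) = 0 \<and>
       \<comment> \<open>(C3)\<close>
       cond_ent b M (all_db N (Q k S)) F = 0 \<and>
       \<comment> \<open>(C4)\<close>
       (\<forall>n\<in>{1..N}. cond_ent b M (A k S n)
          (\<lambda>\<omega>. (Q k S n \<omega>, W_all K W \<omega>, rand_part RS Cc \<omega>)) = 0) \<and>
       \<comment> \<open>(C5)\<close>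
       cond_ent b M (W k) (\<lambda>\<omega>. (F \<omega>, all_db N (A k S) \<omega>, rand_part RS S \<omega>)) = 0 \<and>
       \<comment> \<open>(C6)\<close>
       (\<forall>k'\<in>{1..K}. \<forall>n\<in>{1..N}. \<exists>S'. admissible Cc m S' \<and>
          ent b M (rand_part RS S') = ent b M (rand_part RS S) \<and>
          map_pmf (\<lambda>\<omega>. (Q k S n \<omega>, A k S n \<omega>, W_all K W \<omega>, rand_part RS Cc \<omega>)) M =
          map_pmf (\<lambda>\<omega>. (Q k' S' n \<omega>, A k' S' n \<omega>, W_all K W \<omega>, rand_part RS Cc \<omega>)) M) \<and>
       \<comment> \<open>(C7)\<close>
       mut_inf b M (W_bar K W k) (\<lambda>\<omega>. (F \<omega>, all_db N (A k S) \<omega>, rand_part RS S \<omega>)) = 0 \<and>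
       \<comment> \<open>(C8)\<close>
       mut_inf b M (rand_part RS (Cc - S))
          (\<lambda>\<omega>. (F \<omega>, all_db N (A k S) \<omega>, W k \<omega>, rand_part RS S \<omega>)) = 0)"

end

theory Submission
  imports Defs "HOL-Probability.Probability"
begin


definition pr :: "'w pmf \<Rightarrow> ('w \<Rightarrow> 'a) \<Rightarrow> 'w \<Rightarrow> real" where
  "pr M X \<omega> = measure_pmf.prob M {\<omega>'. X \<omega>' = X \<omega>}"

lemma prob_fin_sum:
  assumes "finite (set_pmf M)"
  shows "measure_pmf.prob M A = (\<Sum>\<omega>\<in>set_pmf M \<inter> A. pmf M \<omega>)"
proof -
  have "measure_pmf.prob M A = measure_pmf.prob M (set_pmf M \<inter> A)"
    by (simp add: measure_Int_set_pmf Int_commute)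
  also have "\<dots> = (\<Sum>\<omega>\<in>set_pmf M \<inter> A. pmf M \<omega>)"
    using assms by (simp add: measure_measure_pmf_finite)
  finally show ?thesis .
qed

lemma group_sum:
  assumes fin: "finite (set_pmf M)"
  shows "(\<Sum>t\<in>T ` set_pmf M. measure_pmf.prob M (T -` {t}) * g t)
       = (\<Sum>\<omega>\<in>set_pmf M. pmf M \<omega> * g (T \<omega>))"
proof -
  have "(\<Sum>\<omega>\<in>set_pmf M. pmf M \<omega> * g (T \<omega>))
     = (\<Sum>t\<in>T ` set_pmf M. \<Sum>\<omega>\<in>{\<omega>\<in>set_pmf M. T \<omega> = t}. pmf M \<omega> * g (T \<omega>))"
    by (rule sum.group[symmetric]) (use fin in auto)
  also have "\<dots> = (\<Sum>t\<in>T ` set_pmf M. (\<Sum>\<omega>\<in>{\<omega>\<in>set_pmf M. T \<omega> = t}. pmf M \<omega>) * g t)"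
    by (auto intro!: sum.cong simp: sum_distrib_right)
  also have "\<dots> = (\<Sum>t\<in>T ` set_pmf M. measure_pmf.prob M (T -` {t}) * g t)"
    using fin by (auto intro!: sum.cong arg_cong[where f="\<lambda>A. sum (pmf M) A"] simp: prob_fin_sum)
  finally show ?thesis by simp
qed

lemma ent_pointwise:
  assumes fin: "finite (set_pmf M)"
  shows "ent b M X = - (\<Sum>\<omega>\<in>set_pmf M. pmf M \<omega> * log b (pr M X \<omega>))"
  unfolding ent_def pr_def
  using group_sum[OF fin, of X "\<lambda>x. log b (measure_pmf.prob M (X -` {x}))"]
  by (simp add: pmf_map vimage_def)

lemma pr_pos: "\<omega> \<in> set_pmf M \<Longrightarrow> pr M X \<omega> > 0"
  unfolding pr_def by (rule measure_pmf_posI) auto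

lemma pr_cong:
  assumes "\<forall>\<omega>\<in>set_pmf M. \<forall>\<omega>'\<in>set_pmf M. (X \<omega> = X \<omega>') \<longleftrightarrow> (Y \<omega> = Y \<omega>')" "\<omega> \<in> set_pmf M"
  shows "pr M X \<omega> = pr M Y \<omega>"
proof -
  have "{\<omega>'. X \<omega>' = X \<omega>} \<inter> set_pmf M = {\<omega>'. Y \<omega>' = Y \<omega>} \<inter> set_pmf M"
    using assms by auto
  then show ?thesis unfolding pr_def by (metis measure_Int_set_pmf)
qed

lemma ent_cong:
  assumes fin: "finite (set_pmf M)"
    and "\<forall>\<omega>\<in>set_pmf M. \<forall>\<omega>'\<in>set_pmf M. (X \<omega> = X \<omega>') \<longleftrightarrow> (Y \<omega> = Y \<omega>')"
  shows "ent b M X = ent b M Y"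
  unfolding ent_pointwise[OF fin] using pr_cong[OF assms(2)] by (auto intro!: sum.cong)




definition PP :: "'w pmf \<Rightarrow> 'w measure" where
  "PP M = restrict_space (measure_pmf M) (set_pmf M)"

lemma PP_space[simp]: "space (PP M) = set_pmf M"
  by (simp add: PP_def space_restrict_space)

lemma PP_sets[simp]: "sets (PP M) = Pow (set_pmf M)"
  by (auto simp: PP_def sets_restrict_space)

lemma PP_measure: "A \<subseteq> set_pmf M \<Longrightarrow> measure (PP M) A = measure_pmf.prob M A"
  by (simp add: PP_def measure_restrict_space)

lemma PP_info: "b > 1 \<Longrightarrow> information_space (PP M) b"
proof -
  assume b: "b > 1"
  have "prob_space (PP M)" unfolding PP_def
    by (rule prob_space_restrict_space) (auto simp: emeasure_pmf)
  then show ?thesis using b by (simp add: information_space_def information_space_axioms_def)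
qed

lemma PP_simple: "finite (set_pmf M) \<Longrightarrow> simple_function (PP M) X"
  by (auto simp: simple_function_def)

lemma PP_dist: "finite (set_pmf M) \<Longrightarrow> simple_distributed (PP M) X (\<lambda>x. measure_pmf.prob M (X -` {x}))"
  apply (rule prob_space.simple_distributedI[OF _ PP_simple])
  apply (rule information_space.axioms(1)[OF PP_info[of 2]], simp)
  apply simp_all
  by (metis Int_lower2 PP_measure measure_Int_set_pmf)

lemma submod:
  assumes fin: "finite (set_pmf M)" and b: "b > 1"
  shows "ent b M (\<lambda>\<omega>. (X \<omega>, Y \<omega>, Z \<omega>)) + ent b M Z \<le> ent b M (\<lambda>\<omega>. (X \<omega>, Z \<omega>)) + ent b M (\<lambda>\<omega>. (Y \<omega>, Z \<omega>))"
proof -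
  interpret information_space "PP M" b using PP_info[OF b] .
  let ?XYZ = "\<lambda>\<omega>. (X \<omega>, Y \<omega>, Z \<omega>)" and ?XZ = "\<lambda>\<omega>. (X \<omega>, Z \<omega>)" and ?YZ = "\<lambda>\<omega>. (Y \<omega>, Z \<omega>)"
  have "0 \<le> conditional_mutual_information b (count_space (X ` space (PP M))) (count_space (Y ` space (PP M))) (count_space (Z ` space (PP M))) X Y Z"
    by (rule conditional_mutual_information_nonneg) (simp_all add: PP_simple fin)
  also have "conditional_mutual_information b (count_space (X ` space (PP M))) (count_space (Y ` space (PP M))) (count_space (Z ` space (PP M))) X Y Z = (\<Sum>(x, y, z)\<in>?XYZ ` set_pmf M.
      measure_pmf.prob M (?XYZ -` {(x,y,z)}) * log b (measure_pmf.prob M (?XYZ -` {(x,y,z)}) /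
      (measure_pmf.prob M (?XZ -` {(x,z)}) * (measure_pmf.prob M (?YZ -` {(y,z)}) / measure_pmf.prob M (Z -` {z})))))"
    using conditional_mutual_information_eq[OF PP_dist[OF fin] PP_dist[OF fin] PP_dist[OF fin] PP_dist[OF fin]]
    by simp
  also have "\<dots> = (\<Sum>t\<in>?XYZ ` set_pmf M. measure_pmf.prob M (?XYZ -` {t}) *
      (\<lambda>(x,y,z). log b (measure_pmf.prob M (?XYZ -` {(x,y,z)}) /
      (measure_pmf.prob M (?XZ -` {(x,z)}) * (measure_pmf.prob M (?YZ -` {(y,z)}) / measure_pmf.prob M (Z -` {z}))))) t)"
    by (auto intro!: sum.cong)
  also have "\<dots> = (\<Sum>\<omega>\<in>set_pmf M. pmf M \<omega> * log b (pr M ?XYZ \<omega> / (pr M ?XZ \<omega> * (pr M ?YZ \<omega> / pr M Z \<omega>))))"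
    by (subst group_sum[OF fin]) (simp add: pr_def vimage_def)
  also have "\<dots> = (\<Sum>\<omega>\<in>set_pmf M. pmf M \<omega> * log b (pr M ?XYZ \<omega>) + pmf M \<omega> * log b (pr M Z \<omega>)
          - pmf M \<omega> * log b (pr M ?XZ \<omega>) - pmf M \<omega> * log b (pr M ?YZ \<omega>))"
  proof (intro sum.cong refl)
    fix \<omega> assume w: "\<omega> \<in> set_pmf M"
    note p = pr_pos[OF w, of ?XYZ] pr_pos[OF w, of ?XZ] pr_pos[OF w, of ?YZ] pr_pos[OF w, of Z]
    have "log b (pr M ?XYZ \<omega> / (pr M ?XZ \<omega> * (pr M ?YZ \<omega> / pr M Z \<omega>)))
       = log b (pr M ?XYZ \<omega>) + log b (pr M Z \<omega>) - log b (pr M ?XZ \<omega>) - log b (pr M ?YZ \<omega>)"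
      using p b by (simp add: log_divide log_mult)
    then show "pmf M \<omega> * log b (pr M ?XYZ \<omega> / (pr M ?XZ \<omega> * (pr M ?YZ \<omega> / pr M Z \<omega>))) =
      pmf M \<omega> * log b (pr M ?XYZ \<omega>) + pmf M \<omega> * log b (pr M Z \<omega>)
          - pmf M \<omega> * log b (pr M ?XZ \<omega>) - pmf M \<omega> * log b (pr M ?YZ \<omega>)"
      by (simp only: right_diff_distrib distrib_left)
  qed
  also have "\<dots> = ent b M ?XZ + ent b M ?YZ - ent b M ?XYZ - ent b M Z"
    unfolding ent_pointwise[OF fin] by (simp add: sum_subtractf sum.distrib)
  finally show ?thesis by simp
qed




lemma pr_const: "pr M (\<lambda>\<omega>. c) \<omega> = 1"
  by (simp add: pr_def)

lemma ent_const: "finite (set_pmf M) \<Longrightarrow> ent b M (\<lambda>\<omega>. c) = 0"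
  by (simp add: ent_pointwise pr_const)

lemma submod_gen:
  assumes fin: "finite (set_pmf M)" and b: "b > 1"
    and eqC: "\<forall>\<omega>\<in>set_pmf M. \<forall>\<omega>'\<in>set_pmf M. (C \<omega> = C \<omega>') \<longleftrightarrow> (A \<omega> = A \<omega>' \<and> B \<omega> = B \<omega>')"
    and dA: "\<forall>\<omega>\<in>set_pmf M. \<forall>\<omega>'\<in>set_pmf M. A \<omega> = A \<omega>' \<longrightarrow> D \<omega> = D \<omega>'"
    and dB: "\<forall>\<omega>\<in>set_pmf M. \<forall>\<omega>'\<in>set_pmf M. B \<omega> = B \<omega>' \<longrightarrow> D \<omega> = D \<omega>'"
  shows "ent b M C + ent b M D \<le> ent b M A + ent b M B"
proof -
  have "ent b M (\<lambda>\<omega>. (A \<omega>, B \<omega>, D \<omega>)) + ent b M D \<le> ent b M (\<lambda>\<omega>. (A \<omega>, D \<omega>)) + ent b M (\<lambda>\<omega>. (B \<omega>, D \<omega>))"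
    by (rule submod[OF fin b])
  moreover have "ent b M (\<lambda>\<omega>. (A \<omega>, B \<omega>, D \<omega>)) = ent b M C"
    by (rule ent_cong[OF fin]) (use eqC dA in blast)
  moreover have "ent b M (\<lambda>\<omega>. (A \<omega>, D \<omega>)) = ent b M A"
    by (rule ent_cong[OF fin]) (use dA in blast)
  moreover have "ent b M (\<lambda>\<omega>. (B \<omega>, D \<omega>)) = ent b M B"
    by (rule ent_cong[OF fin]) (use dB in blast)
  ultimately show ?thesis by simp
qed

lemma ent_mono:
  assumes fin: "finite (set_pmf M)" and b: "b > 1"
    and dA: "\<forall>\<omega>\<in>set_pmf M. \<forall>\<omega>'\<in>set_pmf M. A \<omega> = A \<omega>' \<longrightarrow> D \<omega> = D \<omega>'"
  shows "ent b M D \<le> ent b M A"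
  using submod_gen[OF fin b _ dA dA, of A] by simp

lemma ent_nonneg:
  assumes fin: "finite (set_pmf M)" and b: "b > 1"
  shows "0 \<le> ent b M X"
proof -
  have "ent b M (\<lambda>_. ()) = 0" by (rule ent_const[OF fin])
  then show ?thesis using ent_mono[OF fin b, of X "\<lambda>_. ()"] by simp
qed

lemma log_le_lin: "b > 1 \<Longrightarrow> x > 0 \<Longrightarrow> log b x \<le> (x - 1) / ln b"
  unfolding log_def by (simp add: divide_right_mono ln_le_minus_one)

lemma count_bound:
  assumes fin: "finite (set_pmf M)" and b: "b > 1"
    and cnt: "\<forall>\<omega>\<in>set_pmf M. real (card {X \<omega>' | \<omega>'. \<omega>' \<in> set_pmf M \<and> Y \<omega>' = Y \<omega>}) \<le> b powr c (Y \<omega>)"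
  shows "ent b M (\<lambda>\<omega>. (X \<omega>, Y \<omega>)) - ent b M Y \<le> (\<Sum>\<omega>\<in>set_pmf M. pmf M \<omega> * c (Y \<omega>))"
proof -
  let ?T = "\<lambda>\<omega>. (X \<omega>, Y \<omega>)"
  let ?\<Omega> = "set_pmf M"
  define h where "h \<omega> = pr M Y \<omega> / (pr M ?T \<omega> * b powr c (Y \<omega>))" for \<omega>
  have hpos: "h \<omega> > 0" if "\<omega> \<in> ?\<Omega>" for \<omega>
    using pr_pos[OF that, of Y] pr_pos[OF that, of ?T] b unfolding h_def
    by (intro divide_pos_pos mult_pos_pos) auto
  have lhs: "ent b M ?T - ent b M Y - (\<Sum>\<omega>\<in>?\<Omega>. pmf M \<omega> * c (Y \<omega>)) = (\<Sum>\<omega>\<in>?\<Omega>. pmf M \<omega> * log b (h \<omega>))"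
  proof -
    have "(\<Sum>\<omega>\<in>?\<Omega>. pmf M \<omega> * log b (h \<omega>)) = (\<Sum>\<omega>\<in>?\<Omega>. pmf M \<omega> * log b (pr M Y \<omega>) - pmf M \<omega> * log b (pr M ?T \<omega>) - pmf M \<omega> * c (Y \<omega>))"
    proof (intro sum.cong refl)
      fix \<omega> assume w: "\<omega> \<in> ?\<Omega>"
      have "log b (h \<omega>) = log b (pr M Y \<omega>) - log b (pr M ?T \<omega>) - c (Y \<omega>)"
        using pr_pos[OF w, of Y] pr_pos[OF w, of ?T] b unfolding h_def
        by (simp add: log_divide log_mult log_powr)
      then show "pmf M \<omega> * log b (h \<omega>) = pmf M \<omega> * log b (pr M Y \<omega>) - pmf M \<omega> * log b (pr M ?T \<omega>) - pmf M \<omega> * c (Y \<omega>)"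
        by (simp only: right_diff_distrib)
    qed
    then show ?thesis unfolding ent_pointwise[OF fin] by (simp add: sum_subtractf)
  qed
  have sumh: "(\<Sum>\<omega>\<in>?\<Omega>. pmf M \<omega> * h \<omega>) \<le> 1"
  proof -
    let ?g = "\<lambda>t. measure_pmf.prob M (Y -` {snd t}) / (measure_pmf.prob M (?T -` {t}) * b powr c (snd t))"
    have "(\<Sum>\<omega>\<in>?\<Omega>. pmf M \<omega> * h \<omega>) = (\<Sum>\<omega>\<in>?\<Omega>. pmf M \<omega> * ?g (?T \<omega>))"
      by (simp add: h_def pr_def vimage_def)
    also have "\<dots> = (\<Sum>t\<in>?T ` ?\<Omega>. measure_pmf.prob M (?T -` {t}) * ?g t)"
      by (rule group_sum[OF fin, symmetric])
    also have "\<dots> = (\<Sum>t\<in>?T ` ?\<Omega>. measure_pmf.prob M (Y -` {snd t}) / b powr c (snd t))"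
    proof (intro sum.cong refl)
      fix t assume "t \<in> ?T ` ?\<Omega>"
      then obtain \<omega> where w: "\<omega> \<in> ?\<Omega>" "t = ?T \<omega>" by auto
      have "measure_pmf.prob M (?T -` {t}) > 0"
        using w by (intro measure_pmf_posI[OF w(1)]) auto
      then show "measure_pmf.prob M (?T -` {t}) * ?g t = measure_pmf.prob M (Y -` {snd t}) / b powr c (snd t)"
        by simp
    qed
    also have "\<dots> = (\<Sum>y\<in>Y ` ?\<Omega>. \<Sum>t\<in>{t\<in>?T ` ?\<Omega>. snd t = y}. measure_pmf.prob M (Y -` {snd t}) / b powr c (snd t))"
      by (rule sum.group[symmetric]) (use fin in auto)
    also have "\<dots> = (\<Sum>y\<in>Y ` ?\<Omega>. real (card {t\<in>?T ` ?\<Omega>. snd t = y}) * (measure_pmf.prob M (Y -` {y}) / b powr c y))"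
      by (intro sum.cong refl) simp
    also have "\<dots> \<le> (\<Sum>y\<in>Y ` ?\<Omega>. measure_pmf.prob M (Y -` {y}) * 1)"
    proof (intro sum_mono)
      fix y assume "y \<in> Y ` ?\<Omega>"
      then obtain \<omega> where w: "\<omega> \<in> ?\<Omega>" "y = Y \<omega>" by auto
      have "{t\<in>?T ` ?\<Omega>. snd t = y} = (\<lambda>x. (x, y)) ` {X \<omega>' | \<omega>'. \<omega>' \<in> ?\<Omega> \<and> Y \<omega>' = Y \<omega>}"
        using w by (auto intro!: image_eqI)
      then have "card {t\<in>?T ` ?\<Omega>. snd t = y} = card {X \<omega>' | \<omega>'. \<omega>' \<in> ?\<Omega> \<and> Y \<omega>' = Y \<omega>}"
        by (simp add: card_image inj_on_def)
      then have c1: "real (card {t\<in>?T ` ?\<Omega>. snd t = y}) \<le> b powr c y"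
        using cnt w by auto
      have "real (card {t\<in>?T ` ?\<Omega>. snd t = y}) * (measure_pmf.prob M (Y -` {y}) / b powr c y)
          \<le> b powr c y * (measure_pmf.prob M (Y -` {y}) / b powr c y)"
        by (rule mult_right_mono[OF c1]) simp
      also have "\<dots> = measure_pmf.prob M (Y -` {y}) * 1" using b by simp
      finally show "real (card {t\<in>?T ` ?\<Omega>. snd t = y}) * (measure_pmf.prob M (Y -` {y}) / b powr c y)
          \<le> measure_pmf.prob M (Y -` {y}) * 1" .
    qed
    also have "\<dots> = (\<Sum>\<omega>\<in>?\<Omega>. pmf M \<omega> * 1)"
      by (rule group_sum[OF fin])
    also have "\<dots> = 1" using fin by (simp add: sum_pmf_eq_1)
    finally show ?thesis .
  qed
  have "(\<Sum>\<omega>\<in>?\<Omega>. pmf M \<omega> * log b (h \<omega>)) \<le> (\<Sum>\<omega>\<in>?\<Omega>. pmf M \<omega> * ((h \<omega> - 1) / ln b))"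
    by (intro sum_mono mult_left_mono log_le_lin[OF b] hpos) auto
  also have "\<dots> = ((\<Sum>\<omega>\<in>?\<Omega>. pmf M \<omega> * h \<omega>) - (\<Sum>\<omega>\<in>?\<Omega>. pmf M \<omega>)) / ln b"
    by (simp add: sum_divide_distrib[symmetric] sum_subtractf algebra_simps)
  also have "\<dots> \<le> 0"
    using sumh fin b by (intro divide_nonpos_pos) (simp_all add: sum_pmf_eq_1)
  finally show ?thesis using lhs by simp
qed




lemma ent_map:
  assumes "map_pmf T M = map_pmf T' M"
  shows "ent b M (\<lambda>\<omega>. g (T \<omega>)) = ent b M (\<lambda>\<omega>. g (T' \<omega>))"
proof -
  have "map_pmf (\<lambda>\<omega>. g (T \<omega>)) M = map_pmf (\<lambda>\<omega>. g (T' \<omega>)) M"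
    using assms by (metis (no_types) map_pmf_comp)
  then show ?thesis unfolding ent_def by simp
qed

lemma subadd:
  assumes fin: "finite (set_pmf M)" and b: "b > 1"
  shows "ent b M (\<lambda>\<omega>. (A \<omega>, B \<omega>)) \<le> ent b M A + ent b M B"
  using submod_gen[OF fin b, of "\<lambda>\<omega>. (A \<omega>, B \<omega>)" A B "\<lambda>_. ()"] ent_const[OF fin, of b "()"] by simp

lemma mi_nonneg:
  assumes fin: "finite (set_pmf M)" and b: "b > 1"
  shows "0 \<le> mut_inf b M A B"
  using subadd[OF fin b, of A B] unfolding mut_inf_def by simp

lemma mi_mono:
  assumes fin: "finite (set_pmf M)" and b: "b > 1"
    and dX: "\<forall>\<omega>\<in>set_pmf M. \<forall>\<omega>'\<in>set_pmf M. X' \<omega> = X' \<omega>' \<longrightarrow> X \<omega> = X \<omega>'"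
    and dY: "\<forall>\<omega>\<in>set_pmf M. \<forall>\<omega>'\<in>set_pmf M. Y' \<omega> = Y' \<omega>' \<longrightarrow> Y \<omega> = Y \<omega>'"
  shows "mut_inf b M X Y \<le> mut_inf b M X' Y'"
proof -
  have 1: "ent b M (\<lambda>\<omega>. (X' \<omega>, Y \<omega>)) + ent b M X \<le> ent b M X' + ent b M (\<lambda>\<omega>. (X \<omega>, Y \<omega>))"
    by (rule submod_gen[OF fin b, of "\<lambda>\<omega>. (X' \<omega>, Y \<omega>)" X' "\<lambda>\<omega>. (X \<omega>, Y \<omega>)" X]) (simp_all, (use dX in blast)+)
  have 2: "ent b M (\<lambda>\<omega>. (X' \<omega>, Y' \<omega>)) + ent b M Y \<le> ent b M Y' + ent b M (\<lambda>\<omega>. (X' \<omega>, Y \<omega>))"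
    by (rule submod_gen[OF fin b, of "\<lambda>\<omega>. (X' \<omega>, Y' \<omega>)" Y' "\<lambda>\<omega>. (X' \<omega>, Y \<omega>)" Y]) (simp_all, (use dY in blast)+)
  from 1 2 show ?thesis unfolding mut_inf_def by simp
qed

lemma det_of_zero:
  assumes fin: "finite (set_pmf M)" and b: "b > 1"
    and z: "cond_ent b M X Y = 0"
  shows "\<forall>\<omega>\<in>set_pmf M. \<forall>\<omega>'\<in>set_pmf M. Y \<omega> = Y \<omega>' \<longrightarrow> X \<omega> = X \<omega>'"
proof (intro ballI impI)
  fix \<omega> \<omega>' assume w: "\<omega> \<in> set_pmf M" and w': "\<omega>' \<in> set_pmf M" and eq: "Y \<omega> = Y \<omega>'"
  let ?T = "\<lambda>\<omega>. (X \<omega>, Y \<omega>)"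
  have le: "pr M ?T v \<le> pr M Y v" for v
    unfolding pr_def by (rule measure_pmf.finite_measure_mono) auto
  have trm: "pmf M v * (log b (pr M Y v) - log b (pr M ?T v)) \<ge> 0" if "v \<in> set_pmf M" for v
    using le[of v] pr_pos[OF that, of ?T] b by (intro mult_nonneg_nonneg) auto
  have "0 = cond_ent b M X Y" using z by simp
  also have "\<dots> = (\<Sum>v\<in>set_pmf M. pmf M v * (log b (pr M Y v) - log b (pr M ?T v)))"
    unfolding cond_ent_def ent_pointwise[OF fin] by (simp add: sum_subtractf right_diff_distrib)
  finally have "\<forall>v\<in>set_pmf M. pmf M v * (log b (pr M Y v) - log b (pr M ?T v)) = 0"
    using sum_nonneg_eq_0_iff[OF fin, of "\<lambda>v. pmf M v * (log b (pr M Y v) - log b (pr M ?T v))"] trm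
    by auto
  then have "pmf M \<omega> * (log b (pr M Y \<omega>) - log b (pr M ?T \<omega>)) = 0" using w by blast
  then have "log b (pr M Y \<omega>) = log b (pr M ?T \<omega>)" using w by (simp add: set_pmf_iff)
  then have peq: "pr M Y \<omega> = pr M ?T \<omega>"
    using pr_pos[OF w, of Y] pr_pos[OF w, of ?T] b by (auto intro: inj_onD[OF log_inj])
  show "X \<omega> = X \<omega>'"
  proof (rule ccontr)
    assume ne: "X \<omega> \<noteq> X \<omega>'"
    have "measure_pmf.prob M ({v. Y v = Y \<omega>} - {v. ?T v = ?T \<omega>}) > 0"
      using w' eq ne by (intro measure_pmf_posI[OF w']) auto
    also have "measure_pmf.prob M ({v. Y v = Y \<omega>} - {v. ?T v = ?T \<omega>}) =
       measure_pmf.prob M {v. Y v = Y \<omega>} - measure_pmf.prob M {v. ?T v = ?T \<omega>}"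
      by (rule measure_pmf.finite_measure_Diff) auto
    also have "\<dots> = 0" using peq unfolding pr_def by simp
    finally show False by simp
  qed
qed

lemma restrict_eq_iff: "(restrict f A = restrict g A) \<longleftrightarrow> (\<forall>x\<in>A. f x = g x)"
  by (auto simp: fun_eq_iff restrict_def)




lemma card_field_gt1: "1 < CARD('q::{finite,field})"
proof -
  have "card {0::'q, 1} = 2" by simp
  moreover have "card {0::'q, 1} \<le> CARD('q)" by (rule card_mono) auto
  ultimately show ?thesis by simp
qed

lemma card_lists_len: "card {xs :: 'q::finite list. length xs = n} = CARD('q) ^ n"
  using card_lists_length_eq[of "UNIV :: 'q set" n] by simp

lemma finite_lists_len: "finite {xs :: 'q::finite list. length xs = n}"
  using finite_lists_length_eq[of "UNIV :: 'q set" n] by simp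

lemma card_PiE_lists:
  assumes "finite I" and G: "G \<subseteq> PiE I (\<lambda>j. {xs :: 'q::finite list. length xs = l j})"
  shows "real (card G) \<le> real CARD('q) powr real (\<Sum>j\<in>I. l j)"
proof -
  have fin: "finite (PiE I (\<lambda>j. {xs :: 'q::finite list. length xs = l j}))"
    using assms(1) by (intro finite_PiE) (auto simp: finite_lists_len)
  have "card G \<le> card (PiE I (\<lambda>j. {xs :: 'q::finite list. length xs = l j}))"
    by (rule card_mono[OF fin G])
  also have "\<dots> = (\<Prod>j\<in>I. CARD('q) ^ l j)"
    using assms(1) by (simp add: card_PiE card_lists_len)
  also have "\<dots> = CARD('q) ^ (\<Sum>j\<in>I. l j)"
    by (simp add: power_sum)
  finally have "real (card G) \<le> real (CARD('q) ^ (\<Sum>j\<in>I. l j))" by linarith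
  moreover have "real CARD('q) powr real (\<Sum>j\<in>I. l j) = real CARD('q) ^ (\<Sum>j\<in>I. l j)"
    by (rule powr_realpow) simp
  ultimately show ?thesis by (simp only: of_nat_power)
qed

lemma ent_uniform_all:
  fixes W :: "nat \<Rightarrow> 'w \<Rightarrow> 'q::{finite,field} list"
  assumes fin: "finite (set_pmf M)"
    and msg_len: "\<forall>\<omega>\<in>set_pmf M. \<forall>j\<in>{1..K}. length (W j \<omega>) = L"
    and msg_unif: "\<forall>w. (\<forall>j\<in>{1..K}. length (w j) = L) \<longrightarrow>
        measure_pmf.prob M {\<omega>. \<forall>j\<in>{1..K}. W j \<omega> = w j} = 1 / real CARD('q) ^ (K * L)"
  shows "ent (real CARD('q)) M (W_all K W) = real (K * L)"
proof -
  let ?b = "real CARD('q)"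
  let ?p = "1 / ?b ^ (K * L)"
  let ?D = "map_pmf (W_all K W) M"
  have b: "?b > 1" using card_field_gt1[where 'q='q] by simp
  have pm: "pmf ?D x = ?p" if "x \<in> set_pmf ?D" for x
  proof -
    obtain \<omega> where w: "\<omega> \<in> set_pmf M" "x = W_all K W \<omega>" using \<open>x \<in> set_pmf ?D\<close> by auto
    have "W_all K W -` {x} = {\<omega>'. \<forall>j\<in>{1..K}. W j \<omega>' = x j}"
      using w(2) by (auto simp: W_all_def restrict_eq_iff)
    moreover have "\<forall>j\<in>{1..K}. length (x j) = L" using w msg_len by (simp add: W_all_def)
    ultimately show ?thesis using msg_unif by (simp add: pmf_map)
  qed
  have finD: "finite (set_pmf ?D)" using fin by simp
  have "ent ?b M (W_all K W) = - (\<Sum>x\<in>set_pmf ?D. ?p * log ?b ?p)"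
    unfolding ent_def using pm by (simp cong: sum.cong)
  also have "\<dots> = - (log ?b ?p * (\<Sum>x\<in>set_pmf ?D. pmf ?D x))"
    using pm by (simp add: sum_distrib_left mult.commute)
  also have "(\<Sum>x\<in>set_pmf ?D. pmf ?D x) = 1" using finD by (simp add: sum_pmf_eq_1)
  also have "log ?b ?p = - real (K * L)"
    using b by (simp add: log_divide log_nat_power)
  finally show ?thesis by simp
qed

lemma msg_ent_ge:
  fixes W :: "nat \<Rightarrow> 'w \<Rightarrow> 'q::{finite,field} list"
  assumes fin: "finite (set_pmf M)" and K: "K \<ge> 2"
    and msg_len: "\<forall>\<omega>\<in>set_pmf M. \<forall>j\<in>{1..K}. length (W j \<omega>) = L"
    and msg_unif: "\<forall>w. (\<forall>j\<in>{1..K}. length (w j) = L) \<longrightarrow>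
        measure_pmf.prob M {\<omega>. \<forall>j\<in>{1..K}. W j \<omega> = w j} = 1 / real CARD('q) ^ (K * L)"
    and k: "k \<in> {1..K}"
  shows "real L \<le> ent (real CARD('q)) M (W k)"
proof -
  let ?b = "real CARD('q)"
  have b: "?b > 1" using card_field_gt1[where 'q='q] by simp
  have hWa: "ent ?b M (W_all K W) = real (K * L)" by (rule ent_uniform_all[OF fin msg_len msg_unif])
  have split: "ent ?b M (W_all K W) + ent ?b M (\<lambda>_. ()) \<le> ent ?b M (W k) + ent ?b M (W_bar K W k)"
    apply (rule submod_gen[OF fin b, of "W_all K W" "W k" "W_bar K W k" "\<lambda>_. ()"])
    using k by (auto simp: W_all_def W_bar_def restrict_eq_iff)
  have c0: "ent ?b M (\<lambda>_. ()) = 0" by (rule ent_const[OF fin])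
  have cb: "ent ?b M (\<lambda>\<omega>. (W_bar K W k \<omega>, ())) - ent ?b M (\<lambda>_. ()) \<le> (\<Sum>\<omega>\<in>set_pmf M. pmf M \<omega> * real ((K - 1) * L))"
  proof (rule count_bound[OF fin b, where c = "\<lambda>_. real ((K - 1) * L)"], intro ballI)
    fix \<omega> assume "\<omega> \<in> set_pmf M"
    have "{W_bar K W k \<omega>' | \<omega>'. \<omega>' \<in> set_pmf M \<and> () = ()} \<subseteq> PiE ({1..K} - {k}) (\<lambda>j. {xs :: 'q list. length xs = L})"
    proof clarify
      fix \<omega>' assume "\<omega>' \<in> set_pmf M"
      then show "W_bar K W k \<omega>' \<in> PiE ({1..K} - {k}) (\<lambda>j. {xs :: 'q list. length xs = L})"
        unfolding W_bar_def using msg_len by (subst restrict_PiE_iff) auto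
    qed
    from card_PiE_lists[OF _ this]
    have "real (card {W_bar K W k \<omega>' | \<omega>'. \<omega>' \<in> set_pmf M \<and> () = ()}) \<le> ?b powr real ((K - 1) * L)"
      using k by (simp add: card_Diff_singleton)
    then show "real (card {W_bar K W k \<omega>' | \<omega>'. \<omega>' \<in> set_pmf M \<and> () = ()}) \<le> ?b powr real ((K - 1) * L)" .
  qed
  have e1: "ent ?b M (\<lambda>\<omega>. (W_bar K W k \<omega>, ())) = ent ?b M (W_bar K W k)"
    by (rule ent_cong[OF fin]) simp
  have s1: "(\<Sum>\<omega>\<in>set_pmf M. pmf M \<omega> * real ((K - 1) * L)) = real ((K - 1) * L)"
    using fin by (simp add: sum_distrib_right[symmetric] sum_pmf_eq_1)
  have hWb: "ent ?b M (W_bar K W k) \<le> real ((K - 1) * L)" using cb e1 s1 c0 by simp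
  have "real (K * L) \<le> ent ?b M (W k) + real ((K - 1) * L)" using hWa split c0 hWb by linarith
  moreover have "real (K * L) = real L + real ((K - 1) * L)" using K
    by (simp add: algebra_simps of_nat_diff)
  ultimately show ?thesis by linarith
qed




lemma core:
  fixes M :: "'w pmf" and b :: real
  assumes fin: "finite (set_pmf M)" and b: "b > 1"
    and dQn: "\<forall>\<omega>\<in>set_pmf M. \<forall>\<omega>'\<in>set_pmf M. Fv \<omega> = Fv \<omega>' \<longrightarrow> Qn \<omega> = Qn \<omega>'"
    and dQa: "\<forall>\<omega>\<in>set_pmf M. \<forall>\<omega>'\<in>set_pmf M. Fv \<omega> = Fv \<omega>' \<longrightarrow> Qa \<omega> = Qa \<omega>'"
    and dX: "\<forall>\<omega>\<in>set_pmf M. \<forall>\<omega>'\<in>set_pmf M. Fv \<omega> = Fv \<omega>' \<and> An \<omega> = An \<omega>' \<and> Am \<omega> = Am \<omega>' \<and> U \<omega> = U \<omega>' \<longrightarrow> X \<omega> = X \<omega>'"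
    and dXA: "\<forall>\<omega>\<in>set_pmf M. \<forall>\<omega>'\<in>set_pmf M. Wa \<omega> = Wa \<omega>' \<and> Rr \<omega> = Rr \<omega>' \<and> Qn \<omega> = Qn \<omega>' \<and> U \<omega> = U \<omega>' \<longrightarrow> X \<omega> = X \<omega>' \<and> An \<omega> = An \<omega>'"
    and hb: "mut_inf b M X (\<lambda>\<omega>. (Qn \<omega>, An \<omega>)) \<le> 0"
    and h1: "mut_inf b M Wa (\<lambda>\<omega>. (Fv \<omega>, Rr \<omega>, U \<omega>)) \<le> 0"
    and h8: "mut_inf b M Rr (\<lambda>\<omega>. (Fv \<omega>, U \<omega>)) \<le> 0"
  shows "ent b M X \<le> ent b M U + ent b M (\<lambda>\<omega>. (Am \<omega>, Qa \<omega>)) - ent b M Qa"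
proof -
  have E1: "ent b M (\<lambda>\<omega>. (X \<omega>, Fv \<omega>, An \<omega>, Am \<omega>, U \<omega>)) = ent b M (\<lambda>\<omega>. (Fv \<omega>, An \<omega>, Am \<omega>, U \<omega>))"
    by (rule ent_cong[OF fin]) (simp_all, ((insert dQn dQa dX dXA, blast)+)?)
  have E2: "ent b M (\<lambda>\<omega>. (X \<omega>, Fv \<omega>, An \<omega>, U \<omega>)) \<le> ent b M (\<lambda>\<omega>. (X \<omega>, Fv \<omega>, An \<omega>, Am \<omega>, U \<omega>))"
    by (rule ent_mono[OF fin b]) (simp_all, ((insert dQn dQa dX dXA, blast)+)?)
  have E3: "ent b M (\<lambda>\<omega>. (Fv \<omega>, An \<omega>, Am \<omega>, U \<omega>)) + ent b M Qa \<le> ent b M (\<lambda>\<omega>. (Am \<omega>, Qa \<omega>)) + ent b M (\<lambda>\<omega>. (Fv \<omega>, An \<omega>, U \<omega>))"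
    by (rule submod_gen[OF fin b, of "(\<lambda>\<omega>. (Fv \<omega>, An \<omega>, Am \<omega>, U \<omega>))" "(\<lambda>\<omega>. (Am \<omega>, Qa \<omega>))" "(\<lambda>\<omega>. (Fv \<omega>, An \<omega>, U \<omega>))" "Qa"]) (simp_all, ((insert dQn dQa dX dXA, blast)+)?)
  have E4a: "ent b M (\<lambda>\<omega>. (X \<omega>, Fv \<omega>, An \<omega>, U \<omega>)) = ent b M (\<lambda>\<omega>. (X \<omega>, Fv \<omega>, Qn \<omega>, An \<omega>, U \<omega>))"
    by (rule ent_cong[OF fin]) (simp_all, ((insert dQn dQa dX dXA, blast)+)?)
  have E4b: "ent b M (\<lambda>\<omega>. (Fv \<omega>, An \<omega>, U \<omega>)) = ent b M (\<lambda>\<omega>. (Fv \<omega>, Qn \<omega>, An \<omega>, U \<omega>))"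
    by (rule ent_cong[OF fin]) (simp_all, ((insert dQn dQa dX dXA, blast)+)?)
  have E6: "ent b M X + ent b M (\<lambda>\<omega>. (Qn \<omega>, An \<omega>)) - ent b M (\<lambda>\<omega>. (X \<omega>, Qn \<omega>, An \<omega>)) \<le> 0"
    using hb unfolding mut_inf_def by simp
  have E7a: "ent b M (\<lambda>\<omega>. (Qn \<omega>, An \<omega>, U \<omega>)) \<le> ent b M U + ent b M (\<lambda>\<omega>. (Qn \<omega>, An \<omega>))"
    using submod_gen[OF fin b, of "(\<lambda>\<omega>. (Qn \<omega>, An \<omega>, U \<omega>))" "U" "(\<lambda>\<omega>. (Qn \<omega>, An \<omega>))" "\<lambda>_. ()"] ent_const[OF fin, of b "()"]
    by (simp_all, ((insert dQn dQa dX dXA, blast)+)?)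
  have E7b: "ent b M (\<lambda>\<omega>. (X \<omega>, Qn \<omega>, An \<omega>)) \<le> ent b M (\<lambda>\<omega>. (X \<omega>, Qn \<omega>, An \<omega>, U \<omega>))"
    by (rule ent_mono[OF fin b]) (simp_all, ((insert dQn dQa dX dXA, blast)+)?)
  have S1: "ent b M (\<lambda>\<omega>. (Fv \<omega>, Qn \<omega>, An \<omega>, U \<omega>)) + ent b M (\<lambda>\<omega>. (Qn \<omega>, U \<omega>)) \<le> ent b M (\<lambda>\<omega>. (Fv \<omega>, Qn \<omega>, U \<omega>)) + ent b M (\<lambda>\<omega>. (Qn \<omega>, An \<omega>, U \<omega>))"
    by (rule submod_gen[OF fin b, of "(\<lambda>\<omega>. (Fv \<omega>, Qn \<omega>, An \<omega>, U \<omega>))" "(\<lambda>\<omega>. (Fv \<omega>, Qn \<omega>, U \<omega>))" "(\<lambda>\<omega>. (Qn \<omega>, An \<omega>, U \<omega>))" "(\<lambda>\<omega>. (Qn \<omega>, U \<omega>))"]) (simp_all, ((insert dQn dQa dX dXA, blast)+)?)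
  have S2: "ent b M (\<lambda>\<omega>. (Fv \<omega>, Wa \<omega>, Rr \<omega>, X \<omega>, An \<omega>, Qn \<omega>, U \<omega>)) + ent b M (\<lambda>\<omega>. (X \<omega>, An \<omega>, Qn \<omega>, U \<omega>)) \<le> ent b M (\<lambda>\<omega>. (Fv \<omega>, X \<omega>, An \<omega>, Qn \<omega>, U \<omega>)) + ent b M (\<lambda>\<omega>. (Wa \<omega>, Rr \<omega>, X \<omega>, An \<omega>, Qn \<omega>, U \<omega>))"
    by (rule submod_gen[OF fin b, of "(\<lambda>\<omega>. (Fv \<omega>, Wa \<omega>, Rr \<omega>, X \<omega>, An \<omega>, Qn \<omega>, U \<omega>))" "(\<lambda>\<omega>. (Fv \<omega>, X \<omega>, An \<omega>, Qn \<omega>, U \<omega>))" "(\<lambda>\<omega>. (Wa \<omega>, Rr \<omega>, X \<omega>, An \<omega>, Qn \<omega>, U \<omega>))" "(\<lambda>\<omega>. (X \<omega>, An \<omega>, Qn \<omega>, U \<omega>))"]) (simp_all, ((insert dQn dQa dX dXA, blast)+)?)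
  have S3a: "ent b M (\<lambda>\<omega>. (Fv \<omega>, Wa \<omega>, Rr \<omega>, X \<omega>, An \<omega>, Qn \<omega>, U \<omega>)) = ent b M (\<lambda>\<omega>. (Fv \<omega>, Wa \<omega>, Rr \<omega>, Qn \<omega>, U \<omega>))"
    by (rule ent_cong[OF fin]) (simp_all, ((insert dQn dQa dX dXA, blast)+)?)
  have S3b: "ent b M (\<lambda>\<omega>. (Wa \<omega>, Rr \<omega>, X \<omega>, An \<omega>, Qn \<omega>, U \<omega>)) = ent b M (\<lambda>\<omega>. (Wa \<omega>, Rr \<omega>, Qn \<omega>, U \<omega>))"
    by (rule ent_cong[OF fin]) (simp_all, ((insert dQn dQa dX dXA, blast)+)?)
  have S4a: "ent b M (\<lambda>\<omega>. (Fv \<omega>, Qn \<omega>, U \<omega>)) = ent b M (\<lambda>\<omega>. (Fv \<omega>, U \<omega>))"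
    by (rule ent_cong[OF fin]) (simp_all, ((insert dQn dQa dX dXA, blast)+)?)
  have S4b: "ent b M (\<lambda>\<omega>. (Fv \<omega>, Wa \<omega>, Rr \<omega>, Qn \<omega>, U \<omega>)) = ent b M (\<lambda>\<omega>. (Fv \<omega>, Wa \<omega>, Rr \<omega>, U \<omega>))"
    by (rule ent_cong[OF fin]) (simp_all, ((insert dQn dQa dX dXA, blast)+)?)
  have S5: "ent b M (\<lambda>\<omega>. (Wa \<omega>, Rr \<omega>, Qn \<omega>, U \<omega>)) + ent b M U \<le> ent b M (\<lambda>\<omega>. (Wa \<omega>, Rr \<omega>, U \<omega>)) + ent b M (\<lambda>\<omega>. (Qn \<omega>, U \<omega>))"
    by (rule submod_gen[OF fin b, of "(\<lambda>\<omega>. (Wa \<omega>, Rr \<omega>, Qn \<omega>, U \<omega>))" "(\<lambda>\<omega>. (Wa \<omega>, Rr \<omega>, U \<omega>))" "(\<lambda>\<omega>. (Qn \<omega>, U \<omega>))" "U"]) (simp_all, ((insert dQn dQa dX dXA, blast)+)?)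
  have S6b: "ent b M Wa + ent b M (\<lambda>\<omega>. (Fv \<omega>, Rr \<omega>, U \<omega>)) - ent b M (\<lambda>\<omega>. (Wa \<omega>, Fv \<omega>, Rr \<omega>, U \<omega>)) \<le> 0"
    using h1 unfolding mut_inf_def by simp
  have S6a: "ent b M (\<lambda>\<omega>. (Fv \<omega>, Wa \<omega>, Rr \<omega>, U \<omega>)) = ent b M (\<lambda>\<omega>. (Wa \<omega>, Fv \<omega>, Rr \<omega>, U \<omega>))"
    by (rule ent_cong[OF fin]) (simp_all, ((insert dQn dQa dX dXA, blast)+)?)
  have S6c: "ent b M Rr + ent b M (\<lambda>\<omega>. (Fv \<omega>, U \<omega>)) - ent b M (\<lambda>\<omega>. (Rr \<omega>, Fv \<omega>, U \<omega>)) \<le> 0"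
    using h8 unfolding mut_inf_def by simp
  have S6e: "ent b M (\<lambda>\<omega>. (Rr \<omega>, Fv \<omega>, U \<omega>)) = ent b M (\<lambda>\<omega>. (Fv \<omega>, Rr \<omega>, U \<omega>))"
    by (rule ent_cong[OF fin]) (simp_all, ((insert dQn dQa dX dXA, blast)+)?)
  have S6d: "ent b M (\<lambda>\<omega>. (Wa \<omega>, Rr \<omega>, U \<omega>)) \<le> ent b M Wa + ent b M (\<lambda>\<omega>. (Rr \<omega>, U \<omega>))"
    using submod_gen[OF fin b, of "(\<lambda>\<omega>. (Wa \<omega>, Rr \<omega>, U \<omega>))" "Wa" "(\<lambda>\<omega>. (Rr \<omega>, U \<omega>))" "\<lambda>_. ()"] ent_const[OF fin, of b "()"]
    by (simp_all, ((insert dQn dQa dX dXA, blast)+)?)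
  have S6f: "ent b M (\<lambda>\<omega>. (Rr \<omega>, U \<omega>)) \<le> ent b M Rr + ent b M U"
    using submod_gen[OF fin b, of "(\<lambda>\<omega>. (Rr \<omega>, U \<omega>))" "Rr" "U" "\<lambda>_. ()"] ent_const[OF fin, of b "()"]
    by (simp_all, ((insert dQn dQa dX dXA, blast)+)?)
  have E5a: "ent b M (\<lambda>\<omega>. (X \<omega>, An \<omega>, Qn \<omega>, U \<omega>)) = ent b M (\<lambda>\<omega>. (X \<omega>, Qn \<omega>, An \<omega>, U \<omega>))"
    by (rule ent_cong[OF fin]) (simp_all, ((insert dQn dQa dX dXA, blast)+)?)
  have E5b: "ent b M (\<lambda>\<omega>. (Fv \<omega>, X \<omega>, An \<omega>, Qn \<omega>, U \<omega>)) = ent b M (\<lambda>\<omega>. (X \<omega>, Fv \<omega>, Qn \<omega>, An \<omega>, U \<omega>))"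
    by (rule ent_cong[OF fin]) (simp_all, ((insert dQn dQa dX dXA, blast)+)?)
  show ?thesis using E1 E2 E3 E4a E4b E6 E7a E7b S1 S2 S3a S3b S4a S4b S5 S6b S6a S6c S6e S6d S6f E5a E5b by linarith
qed




lemma valid_at:
  assumes "valid_scheme b M N K W RS Cc m F Q A" "k \<in> {1..K}" "admissible Cc m S"
  shows
       "mut_inf b M (W_all K W) (\<lambda>\<omega>. (F \<omega>, rand_part RS Cc \<omega>, rand_part RS S \<omega>)) = 0"
       "mut_inf b M (all_db N (Q k S)) (\<lambda>\<omega>. (W_all K W \<omega>, rand_part RS (Cc - S) \<omega>)) = 0"
       "cond_ent b M (all_db N (Q k S)) F = 0"
       "(\<forall>n\<in>{1..N}. cond_ent b M (A k S n)
          (\<lambda>\<omega>. (Q k S n \<omega>, W_all K W \<omega>, rand_part RS Cc \<omega>)) = 0)"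
       "cond_ent b M (W k) (\<lambda>\<omega>. (F \<omega>, all_db N (A k S) \<omega>, rand_part RS S \<omega>)) = 0"
       "(\<forall>k'\<in>{1..K}. \<forall>n\<in>{1..N}. \<exists>S'. admissible Cc m S' \<and>
          ent b M (rand_part RS S') = ent b M (rand_part RS S) \<and>
          map_pmf (\<lambda>\<omega>. (Q k S n \<omega>, A k S n \<omega>, W_all K W \<omega>, rand_part RS Cc \<omega>)) M =
          map_pmf (\<lambda>\<omega>. (Q k' S' n \<omega>, A k' S' n \<omega>, W_all K W \<omega>, rand_part RS Cc \<omega>)) M)"
       "mut_inf b M (W_bar K W k) (\<lambda>\<omega>. (F \<omega>, all_db N (A k S) \<omega>, rand_part RS S \<omega>)) = 0"
       "mut_inf b M (rand_part RS (Cc - S))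
          (\<lambda>\<omega>. (F \<omega>, all_db N (A k S) \<omega>, W k \<omega>, rand_part RS S \<omega>)) = 0"
  using assms unfolding valid_scheme_def by blast+

lemma per_n:
  fixes M :: "'w pmf"
    and W :: "nat \<Rightarrow> 'w \<Rightarrow> 'q::{finite,field} list"
    and RS :: "'w \<Rightarrow> 'c \<Rightarrow> 'r" and Cc :: "'c set" and m :: nat
    and F :: "'w \<Rightarrow> 'f"
    and Q :: "nat \<Rightarrow> 'c set \<Rightarrow> nat \<Rightarrow> 'w \<Rightarrow> 'qu"
    and A :: "nat \<Rightarrow> 'c set \<Rightarrow> nat \<Rightarrow> 'w \<Rightarrow> 'q list"
    and N K L :: nat
  assumes K: "K \<ge> 2"
    and fin: "finite (set_pmf M)"
    and msg_len: "\<forall>\<omega>\<in>set_pmf M. \<forall>j\<in>{1..K}. length (W j \<omega>) = L"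
    and msg_unif: "\<forall>w. (\<forall>j\<in>{1..K}. length (w j) = L) \<longrightarrow>
        measure_pmf.prob M {\<omega>. \<forall>j\<in>{1..K}. W j \<omega> = w j} = 1 / real CARD('q) ^ (K * L)"
    and ans_len: "\<forall>k\<in>{1..K}. \<forall>S. admissible Cc m S \<longrightarrow> (\<forall>n\<in>{1..N}.
        \<forall>\<omega>\<in>set_pmf M. \<forall>\<omega>'\<in>set_pmf M.
          Q k S n \<omega> = Q k S n \<omega>' \<longrightarrow> length (A k S n \<omega>) = length (A k S n \<omega>'))"
    and valid: "valid_scheme (real CARD('q)) M N K W RS Cc m F Q A"
    and adm: "admissible Cc m S" and n: "n \<in> {1..N}"
  shows "real L \<le> ent (real CARD('q)) M (rand_part RS S) +
     (\<Sum>\<omega>\<in>set_pmf M. pmf M \<omega> * real (\<Sum>j\<in>{1..N} - {n}. length (A 1 S j \<omega>)))"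
proof -
  let ?b = "real CARD('q)"
  have b: "?b > 1" using card_field_gt1[where 'q='q] by simp
  have k1: "(1::nat) \<in> {1..K}" and k2: "(2::nat) \<in> {1..K}" using K by auto
  have SC: "S \<subseteq> Cc" using adm by (simp add: admissible_def)
  note V = valid_at[OF valid k1 adm]
  define X where "X = W 1"
  define Qn where "Qn = Q 1 S n"
  define Qa where "Qa = all_db N (Q 1 S)"
  define An where "An = A 1 S n"
  define Am where "Am = (\<lambda>\<omega>. restrict (\<lambda>j. A 1 S j \<omega>) ({1..N} - {n}))"
  define U where "U = rand_part RS S"
  define Wa where "Wa = W_all K W"
  define Rr where "Rr = rand_part RS (Cc - S)"
  define Rs where "Rs = rand_part RS Cc"
  define Aa where "Aa = all_db N (A 1 S)"
  have dQa: "\<forall>\<omega>\<in>set_pmf M. \<forall>\<omega>'\<in>set_pmf M. F \<omega> = F \<omega>' \<longrightarrow> Qa \<omega> = Qa \<omega>'"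
    unfolding Qa_def by (rule det_of_zero[OF fin b V(3)])
  have dQn: "\<forall>\<omega>\<in>set_pmf M. \<forall>\<omega>'\<in>set_pmf M. F \<omega> = F \<omega>' \<longrightarrow> Qn \<omega> = Qn \<omega>'"
  proof (intro ballI impI)
    fix \<omega> \<omega>' assume w: "\<omega> \<in> set_pmf M" "\<omega>' \<in> set_pmf M" "F \<omega> = F \<omega>'"
    then have "Qa \<omega> = Qa \<omega>'" using dQa by blast
    then show "Qn \<omega> = Qn \<omega>'" using n unfolding Qa_def Qn_def all_db_def restrict_eq_iff by blast
  qed
  have Aa_eq: "Aa \<omega> = Aa \<omega>' \<longleftrightarrow> An \<omega> = An \<omega>' \<and> Am \<omega> = Am \<omega>'" for \<omega> \<omega>'
    using n unfolding Aa_def An_def Am_def all_db_def restrict_eq_iff by auto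
  have dX0: "\<forall>\<omega>\<in>set_pmf M. \<forall>\<omega>'\<in>set_pmf M. (F \<omega>, Aa \<omega>, U \<omega>) = (F \<omega>', Aa \<omega>', U \<omega>') \<longrightarrow> X \<omega> = X \<omega>'"
    unfolding X_def Aa_def U_def by (rule det_of_zero[OF fin b V(5)])
  have dX: "\<forall>\<omega>\<in>set_pmf M. \<forall>\<omega>'\<in>set_pmf M. F \<omega> = F \<omega>' \<and> An \<omega> = An \<omega>' \<and> Am \<omega> = Am \<omega>' \<and> U \<omega> = U \<omega>' \<longrightarrow> X \<omega> = X \<omega>'"
  proof (intro ballI impI)
    fix \<omega> \<omega>' assume w: "\<omega> \<in> set_pmf M" "\<omega>' \<in> set_pmf M"
      and e: "F \<omega> = F \<omega>' \<and> An \<omega> = An \<omega>' \<and> Am \<omega> = Am \<omega>' \<and> U \<omega> = U \<omega>'"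
    then have "(F \<omega>, Aa \<omega>, U \<omega>) = (F \<omega>', Aa \<omega>', U \<omega>')" using Aa_eq by simp
    then show "X \<omega> = X \<omega>'" using dX0 w by blast
  qed
  have dA0: "\<forall>\<omega>\<in>set_pmf M. \<forall>\<omega>'\<in>set_pmf M. (Qn \<omega>, Wa \<omega>, Rs \<omega>) = (Qn \<omega>', Wa \<omega>', Rs \<omega>') \<longrightarrow> An \<omega> = An \<omega>'"
    unfolding Qn_def Wa_def Rs_def An_def using V(4) n by (intro det_of_zero[OF fin b]) blast
  have dXA: "\<forall>\<omega>\<in>set_pmf M. \<forall>\<omega>'\<in>set_pmf M. Wa \<omega> = Wa \<omega>' \<and> Rr \<omega> = Rr \<omega>' \<and> Qn \<omega> = Qn \<omega>' \<and> U \<omega> = U \<omega>' \<longrightarrow> X \<omega> = X \<omega>' \<and> An \<omega> = An \<omega>'"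
  proof (intro ballI impI)
    fix \<omega> \<omega>' assume w: "\<omega> \<in> set_pmf M" "\<omega>' \<in> set_pmf M"
      and e: "Wa \<omega> = Wa \<omega>' \<and> Rr \<omega> = Rr \<omega>' \<and> Qn \<omega> = Qn \<omega>' \<and> U \<omega> = U \<omega>'"
    have "Rs \<omega> = Rs \<omega>'" using e SC unfolding Rs_def Rr_def U_def rand_part_def restrict_eq_iff by blast
    then have "(Qn \<omega>, Wa \<omega>, Rs \<omega>) = (Qn \<omega>', Wa \<omega>', Rs \<omega>')" using e by simp
    then have "An \<omega> = An \<omega>'" using dA0 w by blast
    moreover have "X \<omega> = X \<omega>'" using e k1 unfolding X_def Wa_def W_all_def restrict_eq_iff by blast
    ultimately show "X \<omega> = X \<omega>' \<and> An \<omega> = An \<omega>'" by simp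
  qed
  have h1: "mut_inf ?b M Wa (\<lambda>\<omega>. (F \<omega>, Rr \<omega>, U \<omega>)) \<le> 0"
  proof -
    have "mut_inf ?b M Wa (\<lambda>\<omega>. (F \<omega>, Rr \<omega>, U \<omega>)) \<le> mut_inf ?b M Wa (\<lambda>\<omega>. (F \<omega>, Rs \<omega>, U \<omega>))"
      by (rule mi_mono[OF fin b]) (auto simp: Rr_def Rs_def rand_part_def restrict_eq_iff)
    then show ?thesis using V(1) unfolding Wa_def Rs_def U_def by simp
  qed
  have h8: "mut_inf ?b M Rr (\<lambda>\<omega>. (F \<omega>, U \<omega>)) \<le> 0"
  proof -
    have "mut_inf ?b M Rr (\<lambda>\<omega>. (F \<omega>, U \<omega>)) \<le> mut_inf ?b M Rr (\<lambda>\<omega>. (F \<omega>, Aa \<omega>, X \<omega>, U \<omega>))"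
      by (rule mi_mono[OF fin b]) auto
    then show ?thesis using V(8) unfolding Rr_def Aa_def X_def U_def by simp
  qed
  have hb: "mut_inf ?b M X (\<lambda>\<omega>. (Qn \<omega>, An \<omega>)) \<le> 0"
  proof -
    obtain S' where S': "admissible Cc m S'"
      and mp: "map_pmf (\<lambda>\<omega>. (Q 1 S n \<omega>, A 1 S n \<omega>, W_all K W \<omega>, rand_part RS Cc \<omega>)) M =
          map_pmf (\<lambda>\<omega>. (Q 2 S' n \<omega>, A 2 S' n \<omega>, W_all K W \<omega>, rand_part RS Cc \<omega>)) M"
      using V(6) k2 n by blast
    note V2 = valid_at[OF valid k2 S']
    let ?T = "\<lambda>\<omega>. (Q 1 S n \<omega>, A 1 S n \<omega>, W_all K W \<omega>, rand_part RS Cc \<omega>)"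
    let ?T' = "\<lambda>\<omega>. (Q 2 S' n \<omega>, A 2 S' n \<omega>, W_all K W \<omega>, rand_part RS Cc \<omega>)"
    let ?g1 = "\<lambda>(q, a, w::nat \<Rightarrow> 'q list, r::'c \<Rightarrow> 'r). (q, a)"
    let ?g2 = "\<lambda>(q, a, w::nat \<Rightarrow> 'q list, r::'c \<Rightarrow> 'r). (w 1, q, a)"
    have e1: "ent ?b M (\<lambda>\<omega>. (Qn \<omega>, An \<omega>)) = ent ?b M (\<lambda>\<omega>. (Q 2 S' n \<omega>, A 2 S' n \<omega>))"
      using ent_map[OF mp, of ?b ?g1] unfolding Qn_def An_def by simp
    have e2: "ent ?b M (\<lambda>\<omega>. (X \<omega>, Qn \<omega>, An \<omega>)) = ent ?b M (\<lambda>\<omega>. (W 1 \<omega>, Q 2 S' n \<omega>, A 2 S' n \<omega>))"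
      using ent_map[OF mp, of ?b ?g2] k1 unfolding Qn_def An_def X_def by (simp add: W_all_def)
    have dQ2: "\<forall>\<omega>\<in>set_pmf M. \<forall>\<omega>'\<in>set_pmf M. F \<omega> = F \<omega>' \<longrightarrow> all_db N (Q 2 S') \<omega> = all_db N (Q 2 S') \<omega>'"
      by (rule det_of_zero[OF fin b V2(3)])
    have "mut_inf ?b M (W 1) (\<lambda>\<omega>. (Q 2 S' n \<omega>, A 2 S' n \<omega>)) \<le>
        mut_inf ?b M (W_bar K W 2) (\<lambda>\<omega>. (F \<omega>, all_db N (A 2 S') \<omega>, rand_part RS S' \<omega>))"
    proof (rule mi_mono[OF fin b])
      show "\<forall>\<omega>\<in>set_pmf M. \<forall>\<omega>'\<in>set_pmf M. W_bar K W 2 \<omega> = W_bar K W 2 \<omega>' \<longrightarrow> W 1 \<omega> = W 1 \<omega>'"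
        using k1 unfolding W_bar_def restrict_eq_iff by auto
      show "\<forall>\<omega>\<in>set_pmf M. \<forall>\<omega>'\<in>set_pmf M. (F \<omega>, all_db N (A 2 S') \<omega>, rand_part RS S' \<omega>) = (F \<omega>', all_db N (A 2 S') \<omega>', rand_part RS S' \<omega>')
          \<longrightarrow> (Q 2 S' n \<omega>, A 2 S' n \<omega>) = (Q 2 S' n \<omega>', A 2 S' n \<omega>')"
      proof (intro ballI impI)
        fix \<omega> \<omega>' assume w: "\<omega> \<in> set_pmf M" "\<omega>' \<in> set_pmf M"
          and e: "(F \<omega>, all_db N (A 2 S') \<omega>, rand_part RS S' \<omega>) = (F \<omega>', all_db N (A 2 S') \<omega>', rand_part RS S' \<omega>')"
        then have "F \<omega> = F \<omega>'" by simp
        then have "all_db N (Q 2 S') \<omega> = all_db N (Q 2 S') \<omega>'" using dQ2 w by blast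
        then show "(Q 2 S' n \<omega>, A 2 S' n \<omega>) = (Q 2 S' n \<omega>', A 2 S' n \<omega>')"
          using e n by (auto simp: all_db_def restrict_eq_iff)
      qed
    qed
    then have "mut_inf ?b M (W 1) (\<lambda>\<omega>. (Q 2 S' n \<omega>, A 2 S' n \<omega>)) \<le> 0" using V2(7) by simp
    then show ?thesis using e1 e2 unfolding mut_inf_def X_def by simp
  qed
  have core_res: "ent ?b M X \<le> ent ?b M U + ent ?b M (\<lambda>\<omega>. (Am \<omega>, Qa \<omega>)) - ent ?b M Qa"
    by (rule core[OF fin b dQn dQa dX dXA hb h1 h8])
  have L1: "real L \<le> ent ?b M X"
    unfolding X_def by (rule msg_ent_ge[OF fin K msg_len msg_unif k1])
  define cw where "cw \<omega> = real (\<Sum>j\<in>{1..N} - {n}. length (A 1 S j \<omega>))" for \<omega>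
  define cy where "cy y = cw (SOME \<omega>. \<omega> \<in> set_pmf M \<and> Qa \<omega> = y)" for y
  have len_eq: "\<forall>j\<in>{1..N}. length (A 1 S j \<omega>) = length (A 1 S j \<omega>')"
    if "\<omega> \<in> set_pmf M" "\<omega>' \<in> set_pmf M" "Qa \<omega> = Qa \<omega>'" for \<omega> \<omega>'
  proof
    fix j assume j: "j \<in> {1..N}"
    have "Q 1 S j \<omega> = Q 1 S j \<omega>'" using that(3) j unfolding Qa_def all_db_def restrict_eq_iff by blast
    then show "length (A 1 S j \<omega>) = length (A 1 S j \<omega>')" using ans_len k1 adm j that by blast
  qed
  have cy_eq: "cy (Qa \<omega>) = cw \<omega>" if w: "\<omega> \<in> set_pmf M" for \<omega>
  proof -
    have ex: "\<exists>v. v \<in> set_pmf M \<and> Qa v = Qa \<omega>" using w by blast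
    define v where "v = (SOME v. v \<in> set_pmf M \<and> Qa v = Qa \<omega>)"
    have v: "v \<in> set_pmf M" "Qa v = Qa \<omega>" using someI_ex[OF ex] unfolding v_def by auto
    have "\<forall>j\<in>{1..N}. length (A 1 S j v) = length (A 1 S j \<omega>)" by (rule len_eq[OF v(1) w v(2)])
    then have "cw v = cw \<omega>" unfolding cw_def by (intro arg_cong[where f=real] sum.cong) auto
    then show ?thesis unfolding cy_def v_def by simp
  qed
  have cnt: "ent ?b M (\<lambda>\<omega>. (Am \<omega>, Qa \<omega>)) - ent ?b M Qa \<le> (\<Sum>\<omega>\<in>set_pmf M. pmf M \<omega> * cy (Qa \<omega>))"
  proof (rule count_bound[OF fin b], intro ballI)
    fix \<omega> assume w: "\<omega> \<in> set_pmf M"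
    have "{Am \<omega>' | \<omega>'. \<omega>' \<in> set_pmf M \<and> Qa \<omega>' = Qa \<omega>} \<subseteq>
        PiE ({1..N} - {n}) (\<lambda>j. {xs :: 'q list. length xs = length (A 1 S j \<omega>)})"
    proof clarify
      fix \<omega>' assume w': "\<omega>' \<in> set_pmf M" and e: "Qa \<omega>' = Qa \<omega>"
      have "\<forall>j\<in>{1..N}. length (A 1 S j \<omega>') = length (A 1 S j \<omega>)" by (rule len_eq[OF w' w e])
      then show "Am \<omega>' \<in> PiE ({1..N} - {n}) (\<lambda>j. {xs :: 'q list. length xs = length (A 1 S j \<omega>)})"
        unfolding Am_def by (subst restrict_PiE_iff) auto
    qed
    from card_PiE_lists[OF _ this]
    show "real (card {Am \<omega>' | \<omega>'. \<omega>' \<in> set_pmf M \<and> Qa \<omega>' = Qa \<omega>}) \<le> ?b powr cy (Qa \<omega>)"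
      using cy_eq[OF w] unfolding cw_def by simp
  qed
  have "(\<Sum>\<omega>\<in>set_pmf M. pmf M \<omega> * cy (Qa \<omega>)) = (\<Sum>\<omega>\<in>set_pmf M. pmf M \<omega> * cw \<omega>)"
    using cy_eq by (auto intro!: sum.cong)
  then show ?thesis using core_res L1 cnt unfolding cw_def U_def by linarith
qed




theorem lemma9:
  fixes M :: "'w pmf"
    and W :: "nat \<Rightarrow> 'w \<Rightarrow> 'q::{finite,field} list"
    and RS :: "'w \<Rightarrow> 'c \<Rightarrow> 'r" and Cc :: "'c set" and m :: nat
    and F :: "'w \<Rightarrow> 'f"
    and Q :: "nat \<Rightarrow> 'c set \<Rightarrow> nat \<Rightarrow> 'w \<Rightarrow> 'qu"
    and A :: "nat \<Rightarrow> 'c set \<Rightarrow> nat \<Rightarrow> 'w \<Rightarrow> 'q list"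
    and N K L :: nat
  assumes N: "N \<ge> 1" and K: "K \<ge> 2" and L: "L \<ge> 1"
    and fin: "finite (set_pmf M)" "finite Cc" "m \<le> card Cc"
    and msg_len: "\<forall>\<omega>\<in>set_pmf M. \<forall>j\<in>{1..K}. length (W j \<omega>) = L"
    and msg_unif: "\<forall>w. (\<forall>j\<in>{1..K}. length (w j) = L) \<longrightarrow>
        measure_pmf.prob M {\<omega>. \<forall>j\<in>{1..K}. W j \<omega> = w j} = 1 / real CARD('q) ^ (K * L)"
    and ans_len: "\<forall>k\<in>{1..K}. \<forall>S. admissible Cc m S \<longrightarrow> (\<forall>n\<in>{1..N}.
        \<forall>\<omega>\<in>set_pmf M. \<forall>\<omega>'\<in>set_pmf M.
          Q k S n \<omega> = Q k S n \<omega>' \<longrightarrow> length (A k S n \<omega>) = length (A k S n \<omega>'))"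
    and valid: "valid_scheme (real CARD('q)) M N K W RS Cc m F Q A"
  shows "\<forall>S. admissible Cc m S \<longrightarrow>
    (let D = Max {(\<Sum>n=1..N. length (A k S0 n \<omega>)) | k S0 \<omega>.
                    k \<in> {1..K} \<and> admissible Cc m S0 \<and> \<omega> \<in> set_pmf M};
         d = real D / real L;
         \<rho>U = ent (real CARD('q)) M (rand_part RS S) / real L
     in (real N - 1) / real N * d + \<rho>U \<ge> 1)"
proof (intro allI impI)
  fix S assume adm: "admissible Cc m S"
  define D where "D = Max {(\<Sum>n=1..N. length (A k S0 n \<omega>)) | k S0 \<omega>.
                    k \<in> {1..K} \<and> admissible Cc m S0 \<and> \<omega> \<in> set_pmf M}"
  define H where "H = ent (real CARD('q)) M (rand_part RS S)"
  define tot where "tot \<omega> = (\<Sum>j\<in>{1..N}. length (A 1 S j \<omega>))" for \<omega>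
  have k1: "(1::nat) \<in> {1..K}" using K by auto
  have finD: "finite {(\<Sum>n=1..N. length (A k S0 n \<omega>)) | k S0 \<omega>.
                    k \<in> {1..K} \<and> admissible Cc m S0 \<and> \<omega> \<in> set_pmf M}"
  proof (rule finite_subset)
    show "{(\<Sum>n=1..N. length (A k S0 n \<omega>)) | k S0 \<omega>.
                    k \<in> {1..K} \<and> admissible Cc m S0 \<and> \<omega> \<in> set_pmf M}
       \<subseteq> (\<lambda>(k, S0, \<omega>). (\<Sum>n=1..N. length (A k S0 n \<omega>))) ` ({1..K} \<times> Pow Cc \<times> set_pmf M)"
    proof clarify
      fix k S0 \<omega> assume "k \<in> {1..K}" "admissible Cc m S0" "\<omega> \<in> set_pmf M"
      then show "(\<Sum>n=1..N. length (A k S0 n \<omega>)) \<in> (\<lambda>(k, S0, \<omega>). (\<Sum>n=1..N. length (A k S0 n \<omega>))) ` ({1..K} \<times> Pow Cc \<times> set_pmf M)"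
        by (intro image_eqI[where x="(k, S0, \<omega>)"]) (auto simp: admissible_def)
    qed
    show "finite ((\<lambda>(k, S0, \<omega>). (\<Sum>n=1..N. length (A k S0 n \<omega>))) ` ({1..K} \<times> Pow Cc \<times> set_pmf M))"
      using fin by auto
  qed
  have totD: "tot \<omega> \<le> D" if "\<omega> \<in> set_pmf M" for \<omega>
    unfolding D_def tot_def using that adm k1 by (intro Max_ge[OF finD]) blast
  have pn: "real L \<le> H + (\<Sum>\<omega>\<in>set_pmf M. pmf M \<omega> * real (\<Sum>j\<in>{1..N} - {n}. length (A 1 S j \<omega>)))"
    if "n \<in> {1..N}" for n
    unfolding H_def by (rule per_n[OF K fin(1) msg_len msg_unif ans_len valid adm that])
  have "(\<Sum>n\<in>{1..N}. real L) \<le> (\<Sum>n\<in>{1..N}. H + (\<Sum>\<omega>\<in>set_pmf M. pmf M \<omega> * real (\<Sum>j\<in>{1..N} - {n}. length (A 1 S j \<omega>))))"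
    by (rule sum_mono) (rule pn)
  also have "\<dots> = real N * H + (\<Sum>\<omega>\<in>set_pmf M. pmf M \<omega> * (\<Sum>n\<in>{1..N}. real (\<Sum>j\<in>{1..N} - {n}. length (A 1 S j \<omega>))))"
    by (simp add: sum.distrib sum_distrib_left) (rule sum.swap)
  also have "\<dots> = real N * H + (\<Sum>\<omega>\<in>set_pmf M. pmf M \<omega> * ((real N - 1) * real (tot \<omega>)))"
  proof -
    have "(\<Sum>n\<in>{1..N}. real (\<Sum>j\<in>{1..N} - {n}. length (A 1 S j \<omega>))) = (real N - 1) * real (tot \<omega>)" for \<omega>
    proof -
      have "(\<Sum>n\<in>{1..N}. real (\<Sum>j\<in>{1..N} - {n}. length (A 1 S j \<omega>)))
          = (\<Sum>n\<in>{1..N}. real (tot \<omega>) - real (length (A 1 S n \<omega>)))"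
      proof (rule sum.cong[OF refl])
        fix n assume "n \<in> {1..N}"
        then have "(\<Sum>j\<in>{1..N} - {n}. length (A 1 S j \<omega>)) + length (A 1 S n \<omega>) = tot \<omega>"
          unfolding tot_def by (subst sum.remove[of "{1..N}" n]) (use \<open>n \<in> {1..N}\<close> in auto)
        then show "real (\<Sum>j\<in>{1..N} - {n}. length (A 1 S j \<omega>)) = real (tot \<omega>) - real (length (A 1 S n \<omega>))"
          by (metis add_diff_cancel_right' of_nat_add)
      qed
      also have "\<dots> = real N * real (tot \<omega>) - real (tot \<omega>)"
        by (simp add: sum_subtractf tot_def)
      finally show ?thesis by (simp add: algebra_simps)
    qed
    then show ?thesis by simp
  qed
  also have "\<dots> \<le> real N * H + (\<Sum>\<omega>\<in>set_pmf M. pmf M \<omega> * ((real N - 1) * real D))"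
    using N totD by (intro add_left_mono sum_mono mult_left_mono) auto
  also have "\<dots> = real N * H + (real N - 1) * real D"
    using fin(1) by (simp add: sum_distrib_right[symmetric] sum_pmf_eq_1)
  finally have main: "real N * real L \<le> real N * H + (real N - 1) * real D" by simp
  have Lp: "real L > 0" and Np: "real N > 0" using L N by auto
  have "1 \<le> (real N - 1) / real N * (real D / real L) + H / real L"
  proof -
    have eq: "(real N - 1) / real N * (real D / real L) + H / real L = ((real N - 1) * real D + real N * H) / (real N * real L)"
      using Lp Np by (simp add: field_simps)
    have "1 \<le> ((real N - 1) * real D + real N * H) / (real N * real L)"
      using main Lp Np by (simp add: le_divide_eq algebra_simps)
    then show ?thesis using eq by simp
  qed
  then show "let D = Max {(\<Sum>n=1..N. length (A k S0 n \<omega>)) | k S0 \<omega>.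
                    k \<in> {1..K} \<and> admissible Cc m S0 \<and> \<omega> \<in> set_pmf M};
         d = real D / real L;
         \<rho>U = ent (real CARD('q)) M (rand_part RS S) / real L
     in (real N - 1) / real N * d + \<rho>U \<ge> 1"
    unfolding D_def H_def Let_def by simp
qed


end
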